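(* Let $G$ be a finite Frobenius group with abelian Frobenius kernel $N$ and abelian Frobenius complement $H$. Then $$A_G(t)=\frac{1}{|G|}\left[\frac{1}{1-|G|t}+\frac{|N|-1}{1-|N|t}+\frac{|N|(|H|-1)}{1-|H|t}\right]$$ and $$B_G(t)=\frac{1}{1-t}\left[1+\frac{(|N|-1)t}{|H|(1-|N|t)}+\frac{(|H|-1)t}{1-|H|t}\right].$$
   Context: A finite group $G$ is a Frobenius group if it has a proper non-trivial subgroup $H$ (a Frobenius complement) such that $H\cap gHg^{-1}=\{1\}$ for all $g\in G\setminus H$; the Frobenius kernel is $N=\left(G\setminus\bigcup_{g\in G}gHg^{-1}\right)\cup\{1\}$, a normal subgroup with $G=N\rtimes H$. For a finite group $G$ and $n\ge0$, $G$ acts on $G^n$ by simultaneous conjugation; let $G^{(n)}\subseteq G^n$ be the set of $n$-tuples of pairwise commuting elements. Let $\alpha_{G,n}$ (resp. $\beta_{G,n}$) be the number of orbits on $G^n$ (resp. $G^{(n)}$), and $A_G(t)=\sum_{n\ge0}\alpha_{G,n}t^n$, $B_G(t)=\sum_{n\ge0}\beta_{G,n}t^n$. *)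

theory Defs
  imports "HOL-Algebra.Group" "HOL-Computational_Algebra.Formal_Power_Series"
begin

definition conj_set :: "('a, 'b) monoid_scheme \<Rightarrow> 'a \<Rightarrow> 'a set \<Rightarrow> 'a set" where
  "conj_set G g H = {g \<otimes>\<^bsub>G\<^esub> h \<otimes>\<^bsub>G\<^esub> inv\<^bsub>G\<^esub> g | h. h \<in> H}"

definition frobenius_complement :: "('a, 'b) monoid_scheme \<Rightarrow> 'a set \<Rightarrow> bool" where
  "frobenius_complement G H \<longleftrightarrow> subgroup H G \<and> H \<noteq> {\<one>\<^bsub>G\<^esub>} \<and> H \<noteq> carrier G \<and>
     (\<forall>g \<in> carrier G - H. H \<inter> conj_set G g H = {\<one>\<^bsub>G\<^esub>})"

definition frobenius_kernel :: "('a, 'b) monoid_scheme \<Rightarrow> 'a set \<Rightarrow> 'a set" where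
  "frobenius_kernel G H = (carrier G - (\<Union>g \<in> carrier G. conj_set G g H)) \<union> {\<one>\<^bsub>G\<^esub>}"

definition conj_tuple :: "('a, 'b) monoid_scheme \<Rightarrow> 'a \<Rightarrow> 'a list \<Rightarrow> 'a list" where
  "conj_tuple G g xs = map (\<lambda>x. g \<otimes>\<^bsub>G\<^esub> x \<otimes>\<^bsub>G\<^esub> inv\<^bsub>G\<^esub> g) xs"

definition tuples :: "('a, 'b) monoid_scheme \<Rightarrow> nat \<Rightarrow> 'a list set" where
  "tuples G n = {xs. length xs = n \<and> set xs \<subseteq> carrier G}"

definition comm_tuples :: "('a, 'b) monoid_scheme \<Rightarrow> nat \<Rightarrow> 'a list set" where
  "comm_tuples G n = {xs \<in> tuples G n. \<forall>x \<in> set xs. \<forall>y \<in> set xs. x \<otimes>\<^bsub>G\<^esub> y = y \<otimes>\<^bsub>G\<^esub> x}"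

definition num_orbits :: "('a, 'b) monoid_scheme \<Rightarrow> 'a list set \<Rightarrow> nat" where
  "num_orbits G S = card {{conj_tuple G g xs | g. g \<in> carrier G} | xs. xs \<in> S}"

definition alpha :: "('a, 'b) monoid_scheme \<Rightarrow> nat \<Rightarrow> nat" where
  "alpha G n = num_orbits G (tuples G n)"

definition beta :: "('a, 'b) monoid_scheme \<Rightarrow> nat \<Rightarrow> nat" where
  "beta G n = num_orbits G (comm_tuples G n)"

definition A_fps :: "('a, 'b) monoid_scheme \<Rightarrow> real fps" where
  "A_fps G = Abs_fps (\<lambda>n. real (alpha G n))"

definition B_fps :: "('a, 'b) monoid_scheme \<Rightarrow> real fps" where
  "B_fps G = Abs_fps (\<lambda>n. real (beta G n))"

end

theory Submission
  imports Defs "HOL-Algebra.Group_Action"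
begin

lemma map_conj_id:
  "(map f xs = xs) \<longleftrightarrow> (\<forall>x\<in>set xs. f x = x)"
  by (induction xs) auto

lemma (in group) conj_fix_iff:
  assumes "g \<in> carrier G" "x \<in> carrier G"
  shows "(g \<otimes> x \<otimes> inv g = x) \<longleftrightarrow> (g \<otimes> x = x \<otimes> g)"
proof
  assume "g \<otimes> x \<otimes> inv g = x"
  then have "g \<otimes> x \<otimes> inv g \<otimes> g = x \<otimes> g" by simp
  then show "g \<otimes> x = x \<otimes> g" using assms by (simp add: m_assoc)
next
  assume "g \<otimes> x = x \<otimes> g"
  then show "g \<otimes> x \<otimes> inv g = x" using assms by (simp add: m_assoc)
qed

lemma (in group) cancel_l: "g \<in> carrier G \<Longrightarrow> a \<in> carrier G \<Longrightarrow> inv g \<otimes> (g \<otimes> a) = a"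
  by (simp flip: m_assoc)

lemma (in group) cancel_r: "g \<in> carrier G \<Longrightarrow> a \<in> carrier G \<Longrightarrow> g \<otimes> (inv g \<otimes> a) = a"
  by (simp flip: m_assoc)

lemma (in group) conj_conj_inv: "g \<in> carrier G \<Longrightarrow> a \<in> carrier G \<Longrightarrow> inv g \<otimes> (g \<otimes> a \<otimes> inv g) \<otimes> g = a"
  by (simp add: m_assoc cancel_l)

lemma (in group) conj_tuple_action:
  assumes S: "\<forall>xs\<in>S. set xs \<subseteq> carrier G"
    and st: "\<forall>g\<in>carrier G. \<forall>xs\<in>S. conj_tuple G g xs \<in> S"
  shows "group_action G S (\<lambda>g. restrict (conj_tuple G g) S)"
proof -
  let ?\<phi> = "\<lambda>g. restrict (conj_tuple G g) S"
  have inv_ct: "conj_tuple G (inv g) (conj_tuple G g xs) = xs"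
    if "g \<in> carrier G" "set xs \<subseteq> carrier G" for g xs
    using that by (induction xs) (auto simp: conj_tuple_def conj_conj_inv)
  have comp: "conj_tuple G (g \<otimes> h) xs = conj_tuple G g (conj_tuple G h xs)"
    if "g \<in> carrier G" "h \<in> carrier G" "set xs \<subseteq> carrier G" for g h xs
    using that by (induction xs) (auto simp: conj_tuple_def m_assoc inv_mult_group)
  have bij: "?\<phi> g \<in> Bij S" if g: "g \<in> carrier G" for g
  proof -
    have "bij_betw (conj_tuple G g) S S"
      by (rule bij_betw_byWitness[where f' = "conj_tuple G (inv g)"])
        (use g S st inv_ct[of "inv g"] inv_ct[of g] in auto)
    then show ?thesis unfolding Bij_def by (simp add: bij_betw_def inj_on_def)
  qed
  have hom: "?\<phi> \<in> hom G (BijGroup S)"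
  proof (rule homI)
    fix g assume "g \<in> carrier G" then show "?\<phi> g \<in> carrier (BijGroup S)"
      using bij by (simp add: BijGroup_def)
  next
    fix g h assume gh: "g \<in> carrier G" "h \<in> carrier G"
    show "?\<phi> (g \<otimes> h) = ?\<phi> g \<otimes>\<^bsub>BijGroup S\<^esub> ?\<phi> h"
      using gh bij comp S st by (auto simp: BijGroup_def compose_def fun_eq_iff)
  qed
  show ?thesis unfolding group_action_def group_hom_def
    using hom by (simp add: group_BijGroup group_hom_axioms.intro is_group)
qed

lemma (in group) burnside_tuples:
  assumes fin: "finite (carrier G)" and finS: "finite S"
    and S: "\<forall>xs\<in>S. set xs \<subseteq> carrier G"
    and st: "\<forall>g\<in>carrier G. \<forall>xs\<in>S. conj_tuple G g xs \<in> S"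
  shows "num_orbits G S * card (carrier G) =
         (\<Sum>g\<in>carrier G. card {xs\<in>S. \<forall>x\<in>set xs. g \<otimes> x = x \<otimes> g})"
proof -
  let ?\<phi> = "\<lambda>g. restrict (conj_tuple G g) S"
  interpret A: group_action G S ?\<phi> by (rule conj_tuple_action[OF S st])
  have o: "orbits G S ?\<phi> = {{conj_tuple G g xs | g. g \<in> carrier G} | xs. xs \<in> S}"
    unfolding orbits_def orbit_def by auto
  have i: "invariants S ?\<phi> g = {xs\<in>S. \<forall>x\<in>set xs. g \<otimes> x = x \<otimes> g}" if "g \<in> carrier G" for g
  proof -
    have "conj_tuple G g xs = xs \<longleftrightarrow> (\<forall>x\<in>set xs. g \<otimes> x = x \<otimes> g)" if "xs \<in> S" for xs
      using that S \<open>g \<in> carrier G\<close> conj_fix_iff unfolding conj_tuple_def map_conj_id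
      by blast
    then show ?thesis unfolding invariants_def by auto
  qed
  show ?thesis using A.burnside[OF fin finS] o i
    by (simp add: num_orbits_def order_def)
qed

locale frob = group G for G :: "('a, 'b) monoid_scheme" (structure) +
  fixes H N :: "'a set"
  assumes fin: "finite (carrier G)"
    and fc: "frobenius_complement G H"
    and Ndef: "N = frobenius_kernel G H"
    and Nab: "\<forall>x \<in> N. \<forall>y \<in> N. x \<otimes> y = y \<otimes> x"
    and Hab: "\<forall>x \<in> H. \<forall>y \<in> H. x \<otimes> y = y \<otimes> x"
begin

definition Cent :: "'a \<Rightarrow> 'a set" where
  "Cent g = {y \<in> carrier G. g \<otimes> y = y \<otimes> g}"

definition U :: "'a set" where
  "U = (\<Union>a\<in>carrier G. conj_set G a H) - {\<one>}"

lemma subH: "subgroup H G" using fc unfolding frobenius_complement_def by blast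

lemma Hsub: "H \<subseteq> carrier G" using subH subgroup.subset by blast

lemma Hone: "\<one> \<in> H" using subH subgroup.one_closed by blast

lemma finH: "finite H" using Hsub fin finite_subset by blast

lemma frob_cond: "g \<in> carrier G \<Longrightarrow> g \<notin> H \<Longrightarrow> H \<inter> conj_set G g H = {\<one>}"
  using fc unfolding frobenius_complement_def by blast

lemma conj_set_eq: "conj_set G a H = (\<lambda>h. a \<otimes> h \<otimes> inv a) ` H"
  unfolding conj_set_def by auto

lemma conj_set_sub: "a \<in> carrier G \<Longrightarrow> conj_set G a H \<subseteq> carrier G"
  unfolding conj_set_eq using Hsub by auto

lemma conj_one: "a \<in> carrier G \<Longrightarrow> h \<in> carrier G \<Longrightarrow> a \<otimes> h \<otimes> inv a = \<one> \<Longrightarrow> h = \<one>"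
proof -
  assume a: "a \<in> carrier G" and h: "h \<in> carrier G" and e: "a \<otimes> h \<otimes> inv a = \<one>"
  have "h = inv a \<otimes> (a \<otimes> h \<otimes> inv a) \<otimes> a" using conj_conj_inv[OF a h] by simp
  also have "\<dots> = \<one>" using e a by simp
  finally show "h = \<one>" .
qed

lemma cent_H:
  assumes h: "h \<in> H" "h \<noteq> \<one>" and y: "y \<in> carrier G" and c: "y \<otimes> h = h \<otimes> y"
  shows "y \<in> H"
proof (rule ccontr)
  assume "y \<notin> H"
  have hc: "h \<in> carrier G" using h Hsub by blast
  have "y \<otimes> h \<otimes> inv y = h" using conj_fix_iff[OF y hc] c by simp
  then have "h \<in> conj_set G y H" unfolding conj_set_def using h by force
  then have "h \<in> H \<inter> conj_set G y H" using h by blast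
  then show False using frob_cond[OF y \<open>y \<notin> H\<close>] h by blast
qed

lemma cent_conj:
  assumes a: "a \<in> carrier G" and h: "h \<in> H" "h \<noteq> \<one>" and y: "y \<in> carrier G"
    and c: "y \<otimes> (a \<otimes> h \<otimes> inv a) = (a \<otimes> h \<otimes> inv a) \<otimes> y"
  shows "y \<in> conj_set G a H"
proof -
  have hc: "h \<in> carrier G" using h Hsub by blast
  define z where "z = inv a \<otimes> y \<otimes> a"
  have zc: "z \<in> carrier G" using a y z_def by simp
  have "inv a \<otimes> (y \<otimes> (a \<otimes> h \<otimes> inv a)) \<otimes> a = inv a \<otimes> ((a \<otimes> h \<otimes> inv a) \<otimes> y) \<otimes> a"
    using c by simp
  then have "z \<otimes> h = h \<otimes> z" using a y hc unfolding z_def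
    by (simp add: m_assoc cancel_l)
  then have "z \<in> H" using cent_H[OF h zc] by simp
  moreover have "y = a \<otimes> z \<otimes> inv a" unfolding z_def using a y
    by (simp add: m_assoc cancel_r)
  ultimately show ?thesis unfolding conj_set_def by blast
qed

lemma conj_comm:
  assumes a: "a \<in> carrier G" and x: "x \<in> conj_set G a H" and y: "y \<in> conj_set G a H"
  shows "x \<otimes> y = y \<otimes> x"
proof -
  obtain h k where hk: "h \<in> H" "k \<in> H" "x = a \<otimes> h \<otimes> inv a" "y = a \<otimes> k \<otimes> inv a"
    using x y unfolding conj_set_def by blast
  have hc: "h \<in> carrier G" "k \<in> carrier G" using hk Hsub by auto
  have e: "\<And>p q. p \<in> carrier G \<Longrightarrow> q \<in> carrier G \<Longrightarrow>
     (a \<otimes> p \<otimes> inv a) \<otimes> (a \<otimes> q \<otimes> inv a) = a \<otimes> (p \<otimes> q) \<otimes> inv a"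
    using a by (simp add: m_assoc cancel_l)
  show ?thesis using e[OF hc] e[OF hc(2) hc(1)] hk Hab by simp
qed

lemma Cent_U:
  assumes g: "g \<in> U" shows "\<exists>a\<in>carrier G. Cent g = conj_set G a H"
proof -
  obtain a h where a: "a \<in> carrier G" and h: "h \<in> H" and gd: "g = a \<otimes> h \<otimes> inv a"
    and g1: "g \<noteq> \<one>"
    using g unfolding U_def conj_set_def by blast
  have "h \<noteq> \<one>" using g1 gd a by auto
  have gc: "g \<in> conj_set G a H" using a h gd unfolding conj_set_def by blast
  have "Cent g = conj_set G a H"
  proof
    show "Cent g \<subseteq> conj_set G a H"
      using cent_conj[OF a h \<open>h \<noteq> \<one>\<close>] gd unfolding Cent_def by auto
    show "conj_set G a H \<subseteq> Cent g"
      using conj_comm[OF a gc] conj_set_sub[OF a] unfolding Cent_def by auto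
  qed
  then show ?thesis using a by blast
qed

lemma card_conj: "a \<in> carrier G \<Longrightarrow> card (conj_set G a H) = card H"
  unfolding conj_set_eq
  by (rule card_image) (use Hsub in \<open>auto simp: inj_on_def intro: conjugation_is_inj\<close>)

lemma N_sub: "N \<subseteq> carrier G"
  unfolding Ndef frobenius_kernel_def by auto

lemma one_N: "\<one> \<in> N"
  unfolding Ndef frobenius_kernel_def by auto

lemma one_conj: "\<one> \<in> (\<Union>a\<in>carrier G. conj_set G a H)"
  using Hone unfolding conj_set_def by force

lemma U_sub: "U \<subseteq> carrier G"
  unfolding U_def using conj_set_sub by blast

lemma NU_disj: "N \<inter> U = {}"
  unfolding Ndef frobenius_kernel_def U_def by auto

lemma NU_union: "N \<union> U = carrier G"
  unfolding Ndef frobenius_kernel_def U_def using one_conj conj_set_sub by auto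

lemma Cent_N:
  assumes g: "g \<in> N" "g \<noteq> \<one>" shows "Cent g = N"
proof
  show "N \<subseteq> Cent g" using N_sub Nab g unfolding Cent_def by auto
  show "Cent g \<subseteq> N"
  proof
    fix y assume y: "y \<in> Cent g"
    show "y \<in> N"
    proof (rule ccontr)
      assume "y \<notin> N"
      then have yU: "y \<in> U" using y NU_union unfolding Cent_def by auto
      obtain a where a: "a \<in> carrier G" and ca: "Cent y = conj_set G a H"
        using Cent_U[OF yU] by blast
      have "g \<in> Cent y" using y g N_sub unfolding Cent_def by auto
      then have "g \<in> U" using ca a g unfolding U_def by auto
      then show False using g NU_disj by auto
    qed
  qed
qed

lemma card_U: "card U * card H = card (carrier G) * (card H - 1)"
proof -
  define A where "A = carrier G \<times> (H - {\<one>})"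
  define f where "f = (\<lambda>(a, h). a \<otimes> h \<otimes> inv a)"
  have finA: "finite A" unfolding A_def using fin finH by auto
  have img: "f ` A = U"
  proof
    show "f ` A \<subseteq> U"
    proof
      fix u assume "u \<in> f ` A"
      then obtain x where x: "x \<in> A" "u = f x" by blast
      obtain a h where xd: "x = (a, h)" by (cases x)
      have a: "a \<in> carrier G" "h \<in> H" "h \<noteq> \<one>" using x(1) unfolding xd A_def by simp_all
      have u: "u = a \<otimes> h \<otimes> inv a" using x xd unfolding f_def by simp
      have hc: "h \<in> carrier G" using a Hsub by auto
      have "u \<noteq> \<one>"
      proof
        assume "u = \<one>"
        then have "a \<otimes> h \<otimes> inv a = \<one>" using u by simp
        then have "h = \<one>" by (rule conj_one[OF a(1) hc])
        then show False using a(3) by simp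
      qed
      moreover have "u \<in> conj_set G a H" unfolding conj_set_def using a(2) u by blast
      ultimately show "u \<in> U" unfolding U_def using a(1) by blast
    qed
    show "U \<subseteq> f ` A"
    proof
      fix u assume "u \<in> U"
      then obtain a where a1: "a \<in> carrier G" "u \<in> conj_set G a H" "u \<noteq> \<one>"
        unfolding U_def by blast
      then obtain h where "h \<in> H" "u = a \<otimes> h \<otimes> inv a"
        unfolding conj_set_def by blast
      then have a: "a \<in> carrier G" "h \<in> H" and u: "u = a \<otimes> h \<otimes> inv a" "u \<noteq> \<one>"
        using a1 by auto
      have "h \<noteq> \<one>" using u a by auto
      then have "(a, h) \<in> A" unfolding A_def using a by simp
      moreover have "f (a, h) = u" unfolding f_def using u by simp
      ultimately show "u \<in> f ` A" by (metis image_eqI)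
    qed
  qed
  have fib: "card {x \<in> A. f x = u} = card H" if "u \<in> U" for u
  proof -
    obtain x0 where x0: "x0 \<in> A" "u = f x0" using \<open>u \<in> U\<close> img by blast
    obtain a h where x0d: "x0 = (a, h)" by (cases x0)
    have ah: "(a, h) \<in> A" and u: "u = f (a, h)" using x0 x0d by auto
    have a: "a \<in> carrier G" "h \<in> H" "h \<noteq> \<one>" using ah unfolding A_def by auto
    have hc: "h \<in> carrier G" using a Hsub by auto
    have "{x \<in> A. f x = u} = (\<lambda>k. (a \<otimes> k, h)) ` H"
    proof
      show "(\<lambda>k. (a \<otimes> k, h)) ` H \<subseteq> {x \<in> A. f x = u}"
      proof
        fix x assume "x \<in> (\<lambda>k. (a \<otimes> k, h)) ` H"
        then obtain k where k: "k \<in> H" and x: "x = (a \<otimes> k, h)" by auto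
        have kc: "k \<in> carrier G" using k Hsub by auto
        have "k \<otimes> h = h \<otimes> k" using Hab k a(2) by blast
        then have "k \<otimes> h \<otimes> inv k = h" using conj_fix_iff[OF kc hc] by simp
        have "f x = a \<otimes> (k \<otimes> h \<otimes> inv k) \<otimes> inv a"
          unfolding x f_def using a kc hc by (simp add: m_assoc inv_mult_group)
        also have "\<dots> = u" using u unfolding f_def using \<open>k \<otimes> h \<otimes> inv k = h\<close> by simp
        finally have "f x = u" .
        moreover have "x \<in> A" unfolding A_def x using a kc by simp
        ultimately show "x \<in> {x \<in> A. f x = u}" by simp
      qed
      show "{x \<in> A. f x = u} \<subseteq> (\<lambda>k. (a \<otimes> k, h)) ` H"
      proof
        fix x assume "x \<in> {x \<in> A. f x = u}"
        then have xA: "x \<in> A" and fx: "f x = u" by auto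
        obtain b h' where x: "x = (b, h')" by (cases x)
        have b: "b \<in> carrier G" "h' \<in> H" "h' \<noteq> \<one>" using xA unfolding x A_def by auto
        have e: "b \<otimes> h' \<otimes> inv b = a \<otimes> h \<otimes> inv a" using fx unfolding x u f_def by simp
        have h'c: "h' \<in> carrier G" using b Hsub by auto
        define k where "k = inv a \<otimes> b"
        have kc: "k \<in> carrier G" unfolding k_def using a b by simp
        have bk: "b = a \<otimes> k" unfolding k_def using a b by (simp add: cancel_r)
        have "inv a \<otimes> (b \<otimes> h' \<otimes> inv b) \<otimes> a = inv a \<otimes> (a \<otimes> h \<otimes> inv a) \<otimes> a"
          using e by simp
        then have kh: "k \<otimes> h' \<otimes> inv k = h"
          unfolding bk using a kc hc h'c by (simp add: m_assoc cancel_l inv_mult_group)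
        have kH: "k \<in> H"
        proof (rule ccontr)
          assume "k \<notin> H"
          have "h \<in> conj_set G k H" using kh b unfolding conj_set_def by blast
          then show False using frob_cond[OF kc \<open>k \<notin> H\<close>] a by blast
        qed
        have "k \<otimes> h' = h' \<otimes> k" using Hab kH b(2) by blast
        then have "k \<otimes> h' \<otimes> inv k = h'" using conj_fix_iff[OF kc h'c] by simp
        then have "h' = h" using kh by simp
        then show "x \<in> (\<lambda>k. (a \<otimes> k, h)) ` H" using x bk kH by auto
      qed
    qed
    moreover have "inj_on (\<lambda>k. (a \<otimes> k, h)) H"
      unfolding inj_on_def using a(1) Hsub Units_l_cancel Units_eq by blast
    ultimately show ?thesis by (simp add: card_image)
  qed
  have "card A = (\<Sum>u\<in>f ` A. card {x \<in> A. f x = u})"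
    using sum.image_gen[OF finA, of "\<lambda>_. (1::nat)" f] by simp
  also have "\<dots> = card U * card H" using img fib by simp
  finally have "card A = card U * card H" .
  moreover have "card A = card (carrier G) * (card H - 1)"
    unfolding A_def using finH Hone by (simp add: card_cartesian_product)
  ultimately show ?thesis by simp
qed

lemma card_N: "card N * card H = card (carrier G)"
proof -
  have finN: "finite N" using N_sub fin finite_subset by blast
  have finU: "finite U" using U_sub fin finite_subset by blast
  have "card N + card U = card (carrier G)"
    using card_Un_disjoint[OF finN finU NU_disj] NU_union by simp
  moreover obtain k where k: "card H = Suc k"
    using finH Hone by (metis card_gt_0_iff empty_iff gr0_implies_Suc)
  ultimately have "(card N + card U) * Suc k = card (carrier G) * Suc k"
    "card U * Suc k = card (carrier G) * k" using card_U by simp_all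
  then have "card N * Suc k + card (carrier G) * k = card (carrier G) * k + card (carrier G)"
    by (simp only: add_mult_distrib mult_Suc_right)
  then show ?thesis using k by simp
qed

end

context frob begin

lemma Cent_one: "Cent \<one> = carrier G" unfolding Cent_def by auto

lemma Cent_sub: "Cent g \<subseteq> carrier G" unfolding Cent_def by auto

lemma finN: "finite N" using N_sub fin finite_subset by blast
lemma finU: "finite U" using U_sub fin finite_subset by blast

lemma sum_split:
  "(\<Sum>g\<in>carrier G. F g) = F \<one> + (\<Sum>g\<in>N - {\<one>}. F g) + (\<Sum>g\<in>U. F g)"
proof -
  have "(\<Sum>g\<in>carrier G. F g) = (\<Sum>g\<in>N. F g) + (\<Sum>g\<in>U. F g)"
    using sum.union_disjoint[OF finN finU NU_disj] NU_union by simp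
  moreover have "(\<Sum>g\<in>N. F g) = F \<one> + (\<Sum>g\<in>N - {\<one>}. F g)"
    using sum.remove[OF finN one_N] by simp
  ultimately show ?thesis by simp
qed

lemma conj_tuple_tuples:
  assumes "g \<in> carrier G" "set xs \<subseteq> carrier G"
  shows "set (conj_tuple G g xs) \<subseteq> carrier G" "length (conj_tuple G g xs) = length xs"
  using assms unfolding conj_tuple_def by auto

lemma T_abelian:
  assumes g: "g \<in> carrier G" and X: "Cent g = X" and ab: "\<forall>x\<in>X. \<forall>y\<in>X. x \<otimes> y = y \<otimes> x"
  shows "{xs \<in> comm_tuples G n. \<forall>x\<in>set xs. g \<otimes> x = x \<otimes> g} = {xs. set xs \<subseteq> X \<and> length xs = n}"
    and "{xs \<in> tuples G n. \<forall>x\<in>set xs. g \<otimes> x = x \<otimes> g} = {xs. set xs \<subseteq> X \<and> length xs = n}"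
proof -
  have c: "set xs \<subseteq> X \<longleftrightarrow> set xs \<subseteq> carrier G \<and> (\<forall>x\<in>set xs. g \<otimes> x = x \<otimes> g)" for xs
    using X unfolding Cent_def by auto
  show "{xs \<in> comm_tuples G n. \<forall>x\<in>set xs. g \<otimes> x = x \<otimes> g} = {xs. set xs \<subseteq> X \<and> length xs = n}"
    unfolding comm_tuples_def tuples_def using c ab by blast
  show "{xs \<in> tuples G n. \<forall>x\<in>set xs. g \<otimes> x = x \<otimes> g} = {xs. set xs \<subseteq> X \<and> length xs = n}"
    unfolding tuples_def using c by blast
qed

lemma Cent_U_ab:
  assumes "g \<in> U"
  shows "\<exists>X. Cent g = X \<and> (\<forall>x\<in>X. \<forall>y\<in>X. x \<otimes> y = y \<otimes> x) \<and> card X = card H"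
proof -
  obtain a where a: "a \<in> carrier G" "Cent g = conj_set G a H" using Cent_U[OF assms] by blast
  show ?thesis using a conj_comm[OF a(1)] card_conj[OF a(1)] by blast
qed

lemma count_generic:
  fixes F :: "'a \<Rightarrow> nat" and n :: nat
  assumes F1: "F \<one> = c1"
    and FN: "\<And>g. g \<in> N - {\<one>} \<Longrightarrow> F g = card N ^ n"
    and FU: "\<And>g. g \<in> U \<Longrightarrow> F g = card H ^ n"
  shows "(\<Sum>g\<in>carrier G. F g) = c1 + (card N - 1) * card N ^ n + card U * card H ^ n"
proof -
  have "(\<Sum>g\<in>N - {\<one>}. F g) = (card N - 1) * card N ^ n"
    using FN finN one_N by simp
  moreover have "(\<Sum>g\<in>U. F g) = card U * card H ^ n" using FU by simp
  ultimately show ?thesis using sum_split[of F] F1 by simp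
qed

lemma alpha_count:
  "alpha G n * card (carrier G) = card (carrier G) ^ n + (card N - 1) * card N ^ n + card U * card H ^ n"
proof -
  have S: "\<forall>xs\<in>tuples G n. set xs \<subseteq> carrier G" unfolding tuples_def by auto
  have st: "\<forall>g\<in>carrier G. \<forall>xs\<in>tuples G n. conj_tuple G g xs \<in> tuples G n"
    unfolding tuples_def using conj_tuple_tuples by auto
  have tup: "tuples G n = {xs. set xs \<subseteq> carrier G \<and> length xs = n}"
    unfolding tuples_def by auto
  have finS: "finite (tuples G n)"
    unfolding tup using finite_lists_length_eq[OF fin] by blast
  have "alpha G n * card (carrier G) =
      (\<Sum>g\<in>carrier G. card {xs\<in>tuples G n. \<forall>x\<in>set xs. g \<otimes> x = x \<otimes> g})"
    unfolding alpha_def by (rule burnside_tuples[OF fin finS S st])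
  also have "\<dots> = card (carrier G) ^ n + (card N - 1) * card N ^ n + card U * card H ^ n"
  proof (rule count_generic)
    have "{xs\<in>tuples G n. \<forall>x\<in>set xs. \<one> \<otimes> x = x \<otimes> \<one>} = tuples G n"
      unfolding tuples_def by auto
    then show "card {xs\<in>tuples G n. \<forall>x\<in>set xs. \<one> \<otimes> x = x \<otimes> \<one>} = card (carrier G) ^ n"
      using card_lists_length_eq[OF fin] tup by simp
  next
    fix g assume g: "g \<in> N - {\<one>}"
    have gc: "g \<in> carrier G" using g N_sub by auto
    show "card {xs\<in>tuples G n. \<forall>x\<in>set xs. g \<otimes> x = x \<otimes> g} = card N ^ n"
      using T_abelian(2)[OF gc Cent_N Nab] g card_lists_length_eq[OF finN] by auto
  next
    fix g assume g: "g \<in> U"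
    have gc: "g \<in> carrier G" using g U_sub by auto
    obtain X where X: "Cent g = X" "\<forall>x\<in>X. \<forall>y\<in>X. x \<otimes> y = y \<otimes> x" "card X = card H"
      using Cent_U_ab[OF g] by blast
    have finX: "finite X" using X(1) Cent_sub fin finite_subset by metis
    show "card {xs\<in>tuples G n. \<forall>x\<in>set xs. g \<otimes> x = x \<otimes> g} = card H ^ n"
      using T_abelian(2)[OF gc X(1,2)] card_lists_length_eq[OF finX] X(3) by simp
  qed
  finally show ?thesis .
qed

end

context frob begin

lemma comm_tuples_stable:
  assumes g: "g \<in> carrier G" and xs: "xs \<in> comm_tuples G n"
  shows "conj_tuple G g xs \<in> comm_tuples G n"
proof -
  have xc: "set xs \<subseteq> carrier G" "length xs = n" using xs unfolding comm_tuples_def tuples_def by auto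
  have e: "\<And>p q. p \<in> carrier G \<Longrightarrow> q \<in> carrier G \<Longrightarrow>
     (g \<otimes> p \<otimes> inv g) \<otimes> (g \<otimes> q \<otimes> inv g) = g \<otimes> (p \<otimes> q) \<otimes> inv g"
    using g by (simp add: m_assoc cancel_l)
  have "\<forall>x\<in>set (conj_tuple G g xs). \<forall>y\<in>set (conj_tuple G g xs). x \<otimes> y = y \<otimes> x"
  proof (intro ballI)
    fix x y assume "x \<in> set (conj_tuple G g xs)" "y \<in> set (conj_tuple G g xs)"
    then obtain p q where pq: "p \<in> set xs" "q \<in> set xs" "x = g \<otimes> p \<otimes> inv g" "y = g \<otimes> q \<otimes> inv g"
      unfolding conj_tuple_def by auto
    have "p \<otimes> q = q \<otimes> p" using xs pq unfolding comm_tuples_def by auto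
    moreover have "p \<in> carrier G" "q \<in> carrier G" using pq xc by auto
    ultimately show "x \<otimes> y = y \<otimes> x" using e[of p q] e[of q p] pq by simp
  qed
  then show ?thesis using conj_tuple_tuples[OF g xc(1)] xc unfolding comm_tuples_def tuples_def by auto
qed

lemma comm_Suc:
  "card (comm_tuples G (Suc n)) =
   (\<Sum>g\<in>carrier G. card {xs\<in>comm_tuples G n. \<forall>x\<in>set xs. g \<otimes> x = x \<otimes> g})"
proof -
  let ?T = "\<lambda>g. {xs\<in>comm_tuples G n. \<forall>x\<in>set xs. g \<otimes> x = x \<otimes> g}"
  have finC: "finite (comm_tuples G m)" for m
  proof -
    have "comm_tuples G m \<subseteq> {xs. set xs \<subseteq> carrier G \<and> length xs = m}"
      unfolding comm_tuples_def tuples_def by auto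
    then show ?thesis using finite_lists_length_eq[OF fin] finite_subset by blast
  qed
  have eq: "comm_tuples G (Suc n) = (\<lambda>(g, xs). g # xs) ` (SIGMA g:carrier G. ?T g)"
  proof
    show "comm_tuples G (Suc n) \<subseteq> (\<lambda>(g, xs). g # xs) ` (SIGMA g:carrier G. ?T g)"
    proof
      fix ys assume ys: "ys \<in> comm_tuples G (Suc n)"
      then obtain g xs where ysd: "ys = g # xs" unfolding comm_tuples_def tuples_def
        by (cases ys) auto
      have ys2: "length ys = Suc n" "set ys \<subseteq> carrier G" "\<forall>x\<in>set ys. \<forall>y\<in>set ys. x \<otimes> y = y \<otimes> x"
        using ys unfolding comm_tuples_def tuples_def by auto
      have "g \<in> carrier G" using ys2 ysd by simp
      moreover have "xs \<in> comm_tuples G n" using ys2 unfolding ysd comm_tuples_def tuples_def by simp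
      moreover have "\<forall>x\<in>set xs. g \<otimes> x = x \<otimes> g" using ys2(3) unfolding ysd
        by (meson list.set_intros(1) list.set_intros(2))
      ultimately have "g \<in> carrier G" "xs \<in> ?T g" by auto
      then have "(g, xs) \<in> (SIGMA g:carrier G. ?T g)" by blast
      then show "ys \<in> (\<lambda>(g, xs). g # xs) ` (SIGMA g:carrier G. ?T g)" unfolding ysd
        by (metis (no_types, lifting) case_prod_conv image_eqI)
    qed
    show "(\<lambda>(g, xs). g # xs) ` (SIGMA g:carrier G. ?T g) \<subseteq> comm_tuples G (Suc n)"
    proof
      fix ys assume "ys \<in> (\<lambda>(g, xs). g # xs) ` (SIGMA g:carrier G. ?T g)"
      then obtain g xs where g: "g \<in> carrier G" "xs \<in> ?T g" and ysd: "ys = g # xs" by auto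
      have xsc: "xs \<in> comm_tuples G n" and gx: "\<forall>x\<in>set xs. g \<otimes> x = x \<otimes> g"
        using g(2) by auto
      have xsc2: "length xs = n" "set xs \<subseteq> carrier G" "\<forall>x\<in>set xs. \<forall>y\<in>set xs. x \<otimes> y = y \<otimes> x"
        using xsc unfolding comm_tuples_def tuples_def by auto
      have "\<forall>x\<in>set ys. \<forall>y\<in>set ys. x \<otimes> y = y \<otimes> x"
        unfolding ysd using gx xsc2(3) by (simp (no_asm_simp) only: list.set ball_simps) (metis)
      moreover have "length ys = Suc n" "set ys \<subseteq> carrier G" using xsc2 g(1) ysd by auto
      ultimately show "ys \<in> comm_tuples G (Suc n)"
        unfolding comm_tuples_def tuples_def by blast
    qed
  qed
  have inj: "inj_on (\<lambda>(g, xs). g # xs) (SIGMA g:carrier G. ?T g)"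
    by (auto simp: inj_on_def)
  have "card (comm_tuples G (Suc n)) = card (SIGMA g:carrier G. ?T g)"
    unfolding eq by (rule card_image[OF inj])
  also have "\<dots> = (\<Sum>g\<in>carrier G. card (?T g))"
    using fin finC by (intro card_SigmaI) auto
  finally show ?thesis .
qed

lemma beta_count:
  "beta G n * card (carrier G) = card (comm_tuples G (Suc n))"
  "card (comm_tuples G (Suc n)) = card (comm_tuples G n) + (card N - 1) * card N ^ n + card U * card H ^ n"
proof -
  have S: "\<forall>xs\<in>comm_tuples G n. set xs \<subseteq> carrier G" unfolding comm_tuples_def tuples_def by auto
  have st: "\<forall>g\<in>carrier G. \<forall>xs\<in>comm_tuples G n. conj_tuple G g xs \<in> comm_tuples G n"
    using comm_tuples_stable by blast
  have finS: "finite (comm_tuples G n)"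
  proof -
    have "comm_tuples G n \<subseteq> {xs. set xs \<subseteq> carrier G \<and> length xs = n}"
      unfolding comm_tuples_def tuples_def by auto
    then show ?thesis using finite_lists_length_eq[OF fin] finite_subset by blast
  qed
  show "beta G n * card (carrier G) = card (comm_tuples G (Suc n))"
    unfolding beta_def comm_Suc by (rule burnside_tuples[OF fin finS S st])
  show "card (comm_tuples G (Suc n)) = card (comm_tuples G n) + (card N - 1) * card N ^ n + card U * card H ^ n"
    unfolding comm_Suc
  proof (rule count_generic)
    have "{xs\<in>comm_tuples G n. \<forall>x\<in>set xs. \<one> \<otimes> x = x \<otimes> \<one>} = comm_tuples G n"
      unfolding comm_tuples_def tuples_def by auto
    then show "card {xs\<in>comm_tuples G n. \<forall>x\<in>set xs. \<one> \<otimes> x = x \<otimes> \<one>} = card (comm_tuples G n)"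
      by simp
  next
    fix g assume g: "g \<in> N - {\<one>}"
    have gc: "g \<in> carrier G" using g N_sub by auto
    show "card {xs\<in>comm_tuples G n. \<forall>x\<in>set xs. g \<otimes> x = x \<otimes> g} = card N ^ n"
      using T_abelian(1)[OF gc Cent_N Nab] g card_lists_length_eq[OF finN] by auto
  next
    fix g assume g: "g \<in> U"
    have gc: "g \<in> carrier G" using g U_sub by auto
    obtain X where X: "Cent g = X" "\<forall>x\<in>X. \<forall>y\<in>X. x \<otimes> y = y \<otimes> x" "card X = card H"
      using Cent_U_ab[OF g] by blast
    have finX: "finite X" using X(1) Cent_sub fin finite_subset by metis
    show "card {xs\<in>comm_tuples G n. \<forall>x\<in>set xs. g \<otimes> x = x \<otimes> g} = card H ^ n"
      using T_abelian(1)[OF gc X(1,2)] card_lists_length_eq[OF finX] X(3) by simp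
  qed
qed

lemma comm_zero: "card (comm_tuples G 0) = 1"
proof -
  have "comm_tuples G 0 = {[]}" unfolding comm_tuples_def tuples_def by auto
  then show ?thesis by simp
qed

end

lemma geom_inv: "inverse (1 - fps_const (c::real) * fps_X) = Abs_fps (\<lambda>n. c ^ n)"
proof (rule fps_inverse_unique)
  show "(1 - fps_const c * fps_X) * Abs_fps (\<lambda>n. c ^ n) = 1"
  proof (rule fps_ext)
    fix n show "fps_nth ((1 - fps_const c * fps_X) * Abs_fps (\<lambda>n. c ^ n)) n = fps_nth 1 n"
      by (cases n) (simp_all add: algebra_simps mult.assoc)
  qed
qed

lemma fpsA:
  fixes a :: "nat \<Rightarrow> real" and g m h :: real
  assumes "\<And>n. a n * g = g ^ n + (m - 1) * m ^ n + m * (h - 1) * h ^ n" "g \<noteq> 0"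
  shows "Abs_fps a = fps_const (1 / g) *
           (inverse (1 - fps_const g * fps_X)
            + fps_const (m - 1) * inverse (1 - fps_const m * fps_X)
            + fps_const (m * (h - 1)) * inverse (1 - fps_const h * fps_X))"
proof (rule fps_ext)
  fix n
  have "a n = (g ^ n + (m - 1) * m ^ n + m * (h - 1) * h ^ n) / g"
    using assms by (metis nonzero_mult_div_cancel_right)
  then have eq: "a n = (1 / g) * (g ^ n + (m - 1) * m ^ n + m * (h - 1) * h ^ n)" by simp
  then show "fps_nth (Abs_fps a) n = fps_nth (fps_const (1 / g) *
           (inverse (1 - fps_const g * fps_X)
            + fps_const (m - 1) * inverse (1 - fps_const m * fps_X)
            + fps_const (m * (h - 1)) * inverse (1 - fps_const h * fps_X))) n"
    unfolding geom_inv by (simp add: eq)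
qed

lemma fpsB:
  fixes b :: "nat \<Rightarrow> real" and m h :: real
  assumes "b 0 = 1" "\<And>n. b (Suc n) = b n + (m - 1) / h * m ^ n + (h - 1) * h ^ n"
  shows "Abs_fps b = inverse (1 - fps_X) *
           (1 + fps_const ((m - 1) / h) * fps_X * inverse (1 - fps_const m * fps_X)
              + fps_const (h - 1) * fps_X * inverse (1 - fps_const h * fps_X))"
proof -
  let ?R = "1 + fps_const ((m - 1) / h) * fps_X * inverse (1 - fps_const m * fps_X)
              + fps_const (h - 1) * fps_X * inverse (1 - fps_const h * fps_X)"
  have e: "(1 - fps_X) * Abs_fps b = ?R"
  proof (rule fps_ext)
    fix n show "fps_nth ((1 - fps_X) * Abs_fps b) n = fps_nth ?R n"
      unfolding geom_inv using assms by (cases n) (simp_all add: algebra_simps mult.assoc)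
  qed
  have "inverse (1 - fps_X) * (1 - fps_X) = (1 :: real fps)"
    by (rule inverse_mult_eq_1) simp
  then have "Abs_fps b = inverse (1 - fps_X) * ((1 - fps_X) * Abs_fps b)"
    by (metis mult.assoc mult_1)
  then show ?thesis using e by simp
qed

theorem corollary9p4:
  fixes G :: "('a, 'b) monoid_scheme" and H N :: "'a set"
  assumes "group G"
    and "finite (carrier G)"
    and "frobenius_complement G H"
    and "N = frobenius_kernel G H"
    and "\<forall>x \<in> N. \<forall>y \<in> N. x \<otimes>\<^bsub>G\<^esub> y = y \<otimes>\<^bsub>G\<^esub> x"
    and "\<forall>x \<in> H. \<forall>y \<in> H. x \<otimes>\<^bsub>G\<^esub> y = y \<otimes>\<^bsub>G\<^esub> x"
  shows "(A_fps G = fps_const (1 / real (card (carrier G))) *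
           (inverse (1 - fps_const (real (card (carrier G))) * fps_X)
            + fps_const (real (card N) - 1) * inverse (1 - fps_const (real (card N)) * fps_X)
            + fps_const (real (card N) * (real (card H) - 1)) * inverse (1 - fps_const (real (card H)) * fps_X))) \<and>
         (B_fps G = inverse (1 - fps_X) *
           (1 + fps_const ((real (card N) - 1) / real (card H)) * fps_X * inverse (1 - fps_const (real (card N)) * fps_X)
              + fps_const (real (card H) - 1) * fps_X * inverse (1 - fps_const (real (card H)) * fps_X)))"
proof -
  have fr: "frob G H N" unfolding frob_def frob_axioms_def using assms by auto
  interpret F: frob G H N by (rule fr)
  define gn where "gn = card (carrier G)"
  define mn where "mn = card N"
  define hn where "hn = card H"
  have gmh: "mn * hn = gn" unfolding gn_def mn_def hn_def using F.card_N .
  have h1: "hn \<ge> 1" unfolding hn_def using F.finH F.Hone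
    by (metis One_nat_def Suc_leI card_gt_0_iff empty_iff)
  have m1: "mn \<ge> 1" unfolding mn_def using F.finN F.one_N
    by (metis One_nat_def Suc_leI card_gt_0_iff empty_iff)
  have "card F.U * hn = gn * (hn - 1)" using F.card_U unfolding gn_def hn_def .
  also have "\<dots> = (mn * (hn - 1)) * hn" unfolding gmh[symmetric] by (simp add: mult_ac)
  finally have "card F.U * hn = (mn * (hn - 1)) * hn" .
  then have Ueq: "card F.U = mn * (hn - 1)" using h1 by simp
  define g where "g = real gn"
  define m where "m = real mn"
  define h where "h = real hn"
  have rm1: "real (mn - 1) = m - 1" using m1 unfolding m_def by simp
  have rh1: "real (hn - 1) = h - 1" using h1 unfolding h_def by simp
  have gpos: "g > 0" "m > 0" "h > 0" using gmh h1 m1 unfolding g_def m_def h_def by auto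
  have grel: "g = m * h" using gmh unfolding g_def m_def h_def by (metis of_nat_mult)
  have A: "real (alpha G n) * g = g ^ n + (m - 1) * m ^ n + m * (h - 1) * h ^ n" for n
  proof -
    have "alpha G n * gn = gn ^ n + (mn - 1) * mn ^ n + (mn * (hn - 1)) * hn ^ n"
      using F.alpha_count[of n] Ueq unfolding gn_def mn_def hn_def by simp
    then have "real (alpha G n * gn) = real (gn ^ n + (mn - 1) * mn ^ n + (mn * (hn - 1)) * hn ^ n)"
      by simp
    then show ?thesis unfolding g_def m_def h_def using rm1 rh1 unfolding m_def h_def
      by (simp only: of_nat_mult of_nat_add of_nat_power)
  qed
  define ct where "ct n = real (card (comm_tuples G n))" for n
  have ctS: "ct (Suc n) = ct n + (m - 1) * m ^ n + m * (h - 1) * h ^ n" for n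
  proof -
    have "card (comm_tuples G (Suc n)) = card (comm_tuples G n) + (mn - 1) * mn ^ n + (mn * (hn - 1)) * hn ^ n"
      using F.beta_count(2)[of n] Ueq unfolding mn_def hn_def by simp
    then have "real (card (comm_tuples G (Suc n))) = real (card (comm_tuples G n) + (mn - 1) * mn ^ n + (mn * (hn - 1)) * hn ^ n)"
      by simp
    then show ?thesis unfolding ct_def m_def h_def using rm1 rh1 unfolding m_def h_def
      by (simp only: of_nat_mult of_nat_add of_nat_power)
  qed
  have bct: "real (beta G n) * g = ct (Suc n)" for n
  proof -
    have "real (beta G n * gn) = ct (Suc n)" using F.beta_count(1)[of n] unfolding ct_def gn_def by simp
    then show ?thesis unfolding g_def by simp
  qed
  have ct0: "ct 0 = 1" unfolding ct_def using F.comm_zero by simp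
  have B0: "real (beta G 0) = 1"
  proof -
    have "real (beta G 0) * g = 1 + (m - 1) + m * (h - 1)" using bct[of 0] ctS[of 0] ct0 by simp
    also have "\<dots> = g" using grel by (simp add: algebra_simps)
    finally show ?thesis using gpos by simp
  qed
  have BS: "real (beta G (Suc n)) = real (beta G n) + (m - 1) / h * m ^ n + (h - 1) * h ^ n" for n
  proof -
    have "real (beta G (Suc n)) * g = real (beta G n) * g + (m - 1) * m ^ Suc n + m * (h - 1) * h ^ Suc n"
      using bct[of "Suc n"] bct[of n] ctS[of "Suc n"] by simp
    then have e: "real (beta G (Suc n)) * (m * h) = real (beta G n) * (m * h) + (m - 1) * m ^ Suc n + m * (h - 1) * h ^ Suc n"
      unfolding grel .
    have mh: "m * h \<noteq> 0" using gpos by simp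
    have "real (beta G (Suc n)) = (real (beta G n) * (m * h) + (m - 1) * m ^ Suc n + m * (h - 1) * h ^ Suc n) / (m * h)"
      using e mh by (simp add: eq_divide_eq)
    also have "\<dots> = real (beta G n) + (m - 1) / h * m ^ n + (h - 1) * h ^ n"
      using gpos by (simp add: field_simps)
    finally show ?thesis .
  qed
  have "A_fps G = fps_const (1 / g) *
           (inverse (1 - fps_const g * fps_X)
            + fps_const (m - 1) * inverse (1 - fps_const m * fps_X)
            + fps_const (m * (h - 1)) * inverse (1 - fps_const h * fps_X))"
    unfolding A_fps_def by (rule fpsA[OF A]) (use gpos in simp)
  moreover have "B_fps G = inverse (1 - fps_X) *
           (1 + fps_const ((m - 1) / h) * fps_X * inverse (1 - fps_const m * fps_X)
              + fps_const (h - 1) * fps_X * inverse (1 - fps_const h * fps_X))"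
    unfolding B_fps_def by (rule fpsB[OF B0 BS])
  ultimately show ?thesis unfolding g_def m_def h_def gn_def mn_def hn_def by simp
qed

end
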